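(* Let $\mathcal F$ be a nice family of graphs, let $G$ be a graph containing no member of $\mathcal F$ as a subgraph, and let $u,v$ be non-adjacent vertices of $G$. Let $G'$ be obtained from $G$ by symmetrizing $u$ to $v$. Then $G'$ contains no member of $\mathcal F$ as a subgraph.
   Context: Symmetrizing a vertex $u$ to a vertex $v$ in a graph means deleting all edges incident to $u$ and then adding all edges $uw$ where $w$ is a neighbor of $v$ (so the new neighborhood of $u$ equals that of $v$). A (finite or infinite) sequence of graphs $F_1,F_2,\dots$ is nice if for every $i$ and every two non-adjacent vertices $u,v$ of $F_i$, the graph obtained from $F_i$ by joining both $u$ and $v$ to every vertex of $N(u)\cup N(v)$ contains some $F_j$ with $j<i$ as a subgraph. A family $\mathcal F$ of graphs is nice if its elements can be ordered to form a nice sequence. *)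

theory Defs
  imports Main
begin

type_synonym 'a graph = "'a set \<times> ('a \<Rightarrow> 'a \<Rightarrow> bool)"

definition is_graph :: "'a graph \<Rightarrow> bool" where
  "is_graph G \<longleftrightarrow> finite (fst G) \<and>
     (\<forall>x y. snd G x y \<longrightarrow> x \<in> fst G \<and> y \<in> fst G) \<and>
     (\<forall>x y. snd G x y \<longrightarrow> snd G y x) \<and>
     (\<forall>x. \<not> snd G x x)"

definition nbhd :: "'a graph \<Rightarrow> 'a \<Rightarrow> 'a set" where
  "nbhd G x = {y. snd G x y}"

definition subgraph_of :: "'b graph \<Rightarrow> 'a graph \<Rightarrow> bool" where
  "subgraph_of H G \<longleftrightarrow> (\<exists>f. inj_on f (fst H) \<and> f ` fst H \<subseteq> fst G \<and>
     (\<forall>x\<in>fst H. \<forall>y\<in>fst H. snd H x y \<longrightarrow> snd G (f x) (f y)))"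

definition symmetrize :: "'a graph \<Rightarrow> 'a \<Rightarrow> 'a \<Rightarrow> 'a graph" where
  "symmetrize G u v = (fst G, (\<lambda>x y.
     if x = u then (y \<noteq> u \<and> snd G v y)
     else if y = u then snd G v x
     else snd G x y))"

definition join_both :: "'a graph \<Rightarrow> 'a \<Rightarrow> 'a \<Rightarrow> 'a graph" where
  "join_both G u v = (fst G, (\<lambda>x y. snd G x y \<or>
     ((x = u \<or> x = v) \<and> y \<in> nbhd G u \<union> nbhd G v) \<or>
     ((y = u \<or> y = v) \<and> x \<in> nbhd G u \<union> nbhd G v)))"

definition nice_seq :: "nat set \<Rightarrow> (nat \<Rightarrow> 'b graph) \<Rightarrow> bool" where
  "nice_seq I F \<longleftrightarrow> (I = UNIV \<or> (\<exists>n. I = {..<n})) \<and>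
     (\<forall>i\<in>I. \<forall>u\<in>fst (F i). \<forall>v\<in>fst (F i). u \<noteq> v \<longrightarrow> \<not> snd (F i) u v \<longrightarrow>
        (\<exists>j\<in>I. j < i \<and> subgraph_of (F j) (join_both (F i) u v)))"

definition nice_family :: "'b graph set \<Rightarrow> bool" where
  "nice_family \<F> \<longleftrightarrow> (\<exists>I F. nice_seq I F \<and> inj_on F I \<and> F ` I = \<F>)"

end

theory Submission
  imports Defs
begin

lemma key:
  fixes G :: "'a graph" and H :: "'b graph"
  assumes gG: "is_graph G" and gH: "is_graph H"
    and uG: "u \<in> fst G" and vG: "v \<in> fst G" and nuv: "\<not> snd G u v"
    and sub: "subgraph_of H (symmetrize G u v)"
    and nsub: "\<not> subgraph_of H G"
  shows "\<exists>a\<in>fst H. \<exists>b\<in>fst H. a \<noteq> b \<and> \<not> snd H a b \<and>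
     (\<forall>K :: 'b graph. subgraph_of K (join_both H a b) \<longrightarrow> subgraph_of K (symmetrize G u v))"
proof -
  have fstS: "fst (symmetrize G u v) = fst G" unfolding symmetrize_def by simp
  obtain f where finj: "inj_on f (fst H)" and fim: "f ` fst H \<subseteq> fst G"
    and fe: "\<forall>x\<in>fst H. \<forall>y\<in>fst H. snd H x y \<longrightarrow> snd (symmetrize G u v) (f x) (f y)"
    using sub fstS unfolding subgraph_of_def by auto
  have Gsym: "\<And>x y. snd G x y \<Longrightarrow> snd G y x" and Girr: "\<And>x. \<not> snd G x x"
    using gG unfolding is_graph_def by auto
  have Hirr: "\<And>x. \<not> snd H x x" and Hsym: "\<And>x y. snd H x y \<Longrightarrow> snd H y x"
    using gH unfolding is_graph_def by auto
  have S: "\<And>x y. snd (symmetrize G u v) x y = (if x = u then (y \<noteq> u \<and> snd G v y)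
     else if y = u then snd G v x else snd G x y)"
    unfolding symmetrize_def by simp
  have "u \<in> f ` fst H"
  proof (rule ccontr)
    assume nu: "u \<notin> f ` fst H"
    have "\<forall>x\<in>fst H. \<forall>y\<in>fst H. snd H x y \<longrightarrow> snd G (f x) (f y)"
    proof (intro ballI impI)
      fix x y assume x: "x \<in> fst H" and y: "y \<in> fst H" and e: "snd H x y"
      have "f x \<noteq> u" "f y \<noteq> u" using nu x y by auto
      moreover have "snd (symmetrize G u v) (f x) (f y)" using fe x y e by blast
      ultimately show "snd G (f x) (f y)" by (simp add: S)
    qed
    then show False using nsub finj fim unfolding subgraph_of_def by blast
  qed
  then obtain a where a: "a \<in> fst H" "f a = u" by auto
  have "v \<in> f ` fst H"
  proof (rule ccontr)
    assume nv: "v \<notin> f ` fst H"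
    define f' where "f' = f(a := v)"
    have "inj_on f' (fst H)"
    proof (rule inj_onI)
      fix x y assume x: "x \<in> fst H" and y: "y \<in> fst H" and e: "f' x = f' y"
      show "x = y"
      proof (cases "x = a")
        case True then show ?thesis using e y nv unfolding f'_def by (cases "y = a") auto
      next
        case False then show ?thesis using e y x nv finj unfolding f'_def inj_on_def
          by (cases "y = a") auto
      qed
    qed
    moreover have "f' ` fst H \<subseteq> fst G" using fim vG unfolding f'_def by auto
    moreover have "\<forall>x\<in>fst H. \<forall>y\<in>fst H. snd H x y \<longrightarrow> snd G (f' x) (f' y)"
    proof (intro ballI impI)
      fix x y assume x: "x \<in> fst H" and y: "y \<in> fst H" and e: "snd H x y"
      have fxy: "snd (symmetrize G u v) (f x) (f y)" using fe x y e by blast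
      have xy: "x \<noteq> y" using e Hirr by auto
      show "snd G (f' x) (f' y)"
      proof (cases "x = a")
        case True
        then have "f y \<noteq> u" using xy finj a y x by (metis inj_onD)
        then show ?thesis using True fxy a S xy unfolding f'_def by auto
      next
        case False
        note xa = False
        show ?thesis
        proof (cases "y = a")
          case True
          then have "f x \<noteq> u" using xy finj a y x by (metis inj_onD)
          then have "snd G v (f x)" using True fxy a S by auto
          then have "snd G (f x) v" by (rule Gsym)
          then show ?thesis using True xy unfolding f'_def by auto
        next
          case False
          then have "f x \<noteq> u" "f y \<noteq> u" using xa finj a y x by (metis inj_onD)+
          then show ?thesis using False xa fxy S unfolding f'_def by auto
        qed
      qed
    qed
    ultimately show False using nsub unfolding subgraph_of_def by blast
  qed
  then obtain b where b: "b \<in> fst H" "f b = v" by auto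
  have uv: "u \<noteq> v"
  proof
    assume uv: "u = v"
    have "\<forall>x\<in>fst H. \<forall>y\<in>fst H. snd H x y \<longrightarrow> snd G (f x) (f y)"
    proof (intro ballI impI)
      fix x y assume x: "x \<in> fst H" and y: "y \<in> fst H" and e: "snd H x y"
      have h: "snd (symmetrize G u v) (f x) (f y)" using fe x y e by blast
      show "snd G (f x) (f y)"
      proof (cases "f x = u")
        case True then show ?thesis using h S uv by auto
      next
        case False
        then show ?thesis
        proof (cases "f y = u")
          case True
          then have "snd G u (f x)" using h S uv False by auto
          then show ?thesis using True Gsym by blast
        next
          case False2: False
          then show ?thesis using h S False by auto
        qed
      qed
    qed
    then show False using nsub finj fim unfolding subgraph_of_def by blast
  qed
  have ab: "a \<noteq> b" using a b uv by auto
  have nab: "\<not> snd H a b"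
  proof
    assume "snd H a b"
    then have "snd (symmetrize G u v) u v" using fe a b by auto
    then show False using S Girr by auto
  qed
  have NN: "\<And>w. w \<in> fst H \<Longrightarrow> w \<in> nbhd H a \<union> nbhd H b \<Longrightarrow> f w \<noteq> u \<and> snd G v (f w)"
  proof -
    fix w assume w: "w \<in> fst H" and wn: "w \<in> nbhd H a \<union> nbhd H b"
    show "f w \<noteq> u \<and> snd G v (f w)"
    proof (cases "snd H a w")
      case True
      then have "snd (symmetrize G u v) u (f w)" using fe a w by auto
      then show ?thesis using S by auto
    next
      case False
      then have "snd H b w" using wn unfolding nbhd_def by auto
      then have e: "snd (symmetrize G u v) v (f w)" using fe b w by auto
      have "v \<noteq> u" using uv by auto
      moreover have "f w \<noteq> u"
      proof
        assume "f w = u"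
        then show False using e S Girr \<open>v \<noteq> u\<close> by auto
      qed
      ultimately show ?thesis using e S by auto
    qed
  qed
  have JE: "\<forall>x\<in>fst H. \<forall>y\<in>fst H. snd (join_both H a b) x y \<longrightarrow> snd (symmetrize G u v) (f x) (f y)"
  proof (intro ballI impI)
    fix x y assume x: "x \<in> fst H" and y: "y \<in> fst H" and e: "snd (join_both H a b) x y"
    have vu: "v \<noteq> u" using uv by auto
    have e': "snd H x y \<or> ((x = a \<or> x = b) \<and> y \<in> nbhd H a \<union> nbhd H b) \<or>
     ((y = a \<or> y = b) \<and> x \<in> nbhd H a \<union> nbhd H b)" using e unfolding join_both_def by simp
    show "snd (symmetrize G u v) (f x) (f y)"
    proof -
      { assume "snd H x y" then have ?thesis using fe x y by blast }
      moreover
      { assume h: "(x = a \<or> x = b) \<and> y \<in> nbhd H a \<union> nbhd H b"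
        then have "f y \<noteq> u \<and> snd G v (f y)" using NN y by blast
        then have ?thesis using h a b S vu by auto }
      moreover
      { assume h: "(y = a \<or> y = b) \<and> x \<in> nbhd H a \<union> nbhd H b"
        then have n: "f x \<noteq> u \<and> snd G v (f x)" using NN x by blast
        then have "snd G (f x) v" using Gsym by blast
        then have ?thesis using h a b S vu n by auto }
      ultimately show ?thesis using e' by blast
    qed
  qed
  have "\<forall>K :: 'b graph. subgraph_of K (join_both H a b) \<longrightarrow> subgraph_of K (symmetrize G u v)"
  proof (intro allI impI)
    fix K :: "'b graph" assume "subgraph_of K (join_both H a b)"
    then obtain g where ginj: "inj_on g (fst K)" and gim: "g ` fst K \<subseteq> fst H"
      and ge: "\<forall>x\<in>fst K. \<forall>y\<in>fst K. snd K x y \<longrightarrow> snd (join_both H a b) (g x) (g y)"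
      unfolding subgraph_of_def by (auto simp: join_both_def)
    have "inj_on (f \<circ> g) (fst K)" using ginj finj gim by (meson comp_inj_on inj_on_subset)
    moreover have "(f \<circ> g) ` fst K \<subseteq> fst (symmetrize G u v)"
      using gim fim unfolding symmetrize_def by auto
    moreover have "\<forall>x\<in>fst K. \<forall>y\<in>fst K. snd K x y \<longrightarrow> snd (symmetrize G u v) ((f \<circ> g) x) ((f \<circ> g) y)"
    proof (intro ballI impI)
      fix x y assume x: "x \<in> fst K" and y: "y \<in> fst K" and e: "snd K x y"
      have "snd (join_both H a b) (g x) (g y)" using ge x y e by blast
      moreover have "g x \<in> fst H" "g y \<in> fst H" using gim x y by auto
      ultimately show "snd (symmetrize G u v) ((f \<circ> g) x) ((f \<circ> g) y)" using JE by simp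
    qed
    ultimately show "subgraph_of K (symmetrize G u v)" unfolding subgraph_of_def by blast
  qed
  then show ?thesis using a b ab nab by blast
qed

theorem proposition4p1:
  fixes \<F> :: "'b graph set" and G :: "'a graph" and u v :: 'a
  assumes "\<forall>H\<in>\<F>. is_graph H"
    and "nice_family \<F>"
    and "is_graph G"
    and "\<forall>H\<in>\<F>. \<not> subgraph_of H G"
    and "u \<in> fst G" and "v \<in> fst G" and "\<not> snd G u v"
  shows "\<forall>H\<in>\<F>. \<not> subgraph_of H (symmetrize G u v)"
proof -
  obtain I F where ns: "nice_seq I F" and FI: "F ` I = \<F>"
    using assms(2) unfolding nice_family_def by blast
  have "\<forall>i. i \<in> I \<longrightarrow> \<not> subgraph_of (F i) (symmetrize G u v)"
  proof (rule allI)
    fix i show "i \<in> I \<longrightarrow> \<not> subgraph_of (F i) (symmetrize G u v)"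
    proof (induction i rule: less_induct)
      case (less i)
      show ?case
      proof (intro impI notI)
        assume iI: "i \<in> I" and s: "subgraph_of (F i) (symmetrize G u v)"
        have Fi: "F i \<in> \<F>" using FI iI by blast
        obtain a b where ab: "a \<in> fst (F i)" "b \<in> fst (F i)" "a \<noteq> b" "\<not> snd (F i) a b"
          and K: "\<forall>K :: 'b graph. subgraph_of K (join_both (F i) a b) \<longrightarrow> subgraph_of K (symmetrize G u v)"
        proof -
          have "is_graph (F i)" using Fi assms(1) by blast
          moreover have "\<not> subgraph_of (F i) G" using Fi assms(4) by blast
          ultimately show ?thesis using key[OF assms(3) _ assms(5,6,7) s] that by metis
        qed
        obtain j where "j \<in> I" "j < i" "subgraph_of (F j) (join_both (F i) a b)"
        proof -
          have "\<forall>i\<in>I. \<forall>u\<in>fst (F i). \<forall>v\<in>fst (F i). u \<noteq> v \<longrightarrow> \<not> snd (F i) u v \<longrightarrow>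
            (\<exists>j\<in>I. j < i \<and> subgraph_of (F j) (join_both (F i) u v))"
            using ns unfolding nice_seq_def by (rule conjunct2)
          then show ?thesis using iI ab that by meson
        qed
        then show False using K less by blast
      qed
    qed
  qed
  then show ?thesis using FI by blast
qed

end
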